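(* Let $\alpha>0$, $V=(V_1,\dots,V_n)\in[0,M]^n$ and $f\in\mathcal{H}_\alpha(M)$, and set $x_i=i/n$. Let $W_i=V_{i+1}+V_i$ and $\delta_i=f(x_{i+1})-f(x_i)$ for $1\le i\le n-1$, with averages $\bar W_n=\frac1{n-1}\sum_{i=1}^{n-1}W_i$, $\overline{\delta^2_n}=\frac1{n-1}\sum_{i=1}^{n-1}\delta_i^2$; let $\tilde W_i=V_{i+2}+V_i$ and $\tilde\delta_i=f(x_{i+2})-f(x_i)$ for $1\le i\le n-2$. Define $$T=\frac1n\sum_{i=1}^{n-1}(W_i+\delta_i^2-\bar W_n-\overline{\delta^2_n})^2,$$ $$\tilde T_1=\frac1n\sum_{i=1}^{n-3}\big(W_{i+1}+\delta_{i+1}^2-V_i-V_{i+3}-(f(x_{i+3})-f(x_i))^2\big)^2,$$ $$\tilde T_2=\frac1n\sum_{i=1}^{n-3}(\tilde W_{i+1}+\tilde\delta_{i+1}^2-\tilde W_i-\tilde\delta_i^2)^2 .$$ Then, with $\bar V_n=\frac1n\sum_{i=1}^nV_i$, $$\frac1n\sum_{i=1}^n(V_i-\bar V_n)^2\lesssim n^{-1}+n^{-4(\alpha\wedge1)}+T+\tilde T_1+\tilde T_2,$$ with an implicit constant not depending on $n,f,V$.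
   Context: $\mathcal{H}_\alpha(M)$: functions $g:[0,1]\to\mathbb{R}$ with $|g^{(\lfloor\alpha\rfloor)}(x)-g^{(\lfloor\alpha\rfloor)}(y)|\le M|x-y|^{\alpha-\lfloor\alpha\rfloor}$ for all $x,y$ and $\|g^{(k)}\|_\infty\le M$ for $k=0,\dots,\lfloor\alpha\rfloor$; $M$ is a fixed sufficiently large constant. $a\lesssim b$ means $a\le Cb$ with $C$ depending only on $\alpha,M$. *)

theory Defs
  imports "HOL-Analysis.Analysis"
begin

definition holder_class :: "real \<Rightarrow> real \<Rightarrow> (real \<Rightarrow> real) \<Rightarrow> bool" where
  "holder_class \<alpha> M g \<longleftrightarrow>
     (\<exists>D :: nat \<Rightarrow> real \<Rightarrow> real.
        (\<forall>x\<in>{0..1}. D 0 x = g x) \<and>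
        (\<forall>k < nat \<lfloor>\<alpha>\<rfloor>. \<forall>x\<in>{0..1}.
            (D k has_real_derivative D (Suc k) x) (at x within {0..1})) \<and>
        (\<forall>k \<le> nat \<lfloor>\<alpha>\<rfloor>. \<forall>x\<in>{0..1}. \<bar>D k x\<bar> \<le> M) \<and>
        (\<forall>x\<in>{0..1}. \<forall>y\<in>{0..1}.
            \<bar>D (nat \<lfloor>\<alpha>\<rfloor>) x - D (nat \<lfloor>\<alpha>\<rfloor>) y\<bar> \<le> M * \<bar>x - y\<bar> powr (\<alpha> - of_int \<lfloor>\<alpha>\<rfloor>)))"

definition xpt :: "nat \<Rightarrow> nat \<Rightarrow> real" where
  "xpt n i = real i / real n"

definition Wv :: "(nat \<Rightarrow> real) \<Rightarrow> nat \<Rightarrow> real" where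
  "Wv V i = V (Suc i) + V i"

definition dlt :: "nat \<Rightarrow> (real \<Rightarrow> real) \<Rightarrow> nat \<Rightarrow> real" where
  "dlt n f i = f (xpt n (Suc i)) - f (xpt n i)"

definition Wt :: "(nat \<Rightarrow> real) \<Rightarrow> nat \<Rightarrow> real" where
  "Wt V i = V (i + 2) + V i"

definition dltt :: "nat \<Rightarrow> (real \<Rightarrow> real) \<Rightarrow> nat \<Rightarrow> real" where
  "dltt n f i = f (xpt n (i + 2)) - f (xpt n i)"

definition Wbar :: "nat \<Rightarrow> (nat \<Rightarrow> real) \<Rightarrow> real" where
  "Wbar n V = (1 / (real n - 1)) * (\<Sum>i=1..n-1. Wv V i)"

definition dlt2bar :: "nat \<Rightarrow> (real \<Rightarrow> real) \<Rightarrow> real" where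
  "dlt2bar n f = (1 / (real n - 1)) * (\<Sum>i=1..n-1. (dlt n f i)^2)"

definition Tstat :: "nat \<Rightarrow> (nat \<Rightarrow> real) \<Rightarrow> (real \<Rightarrow> real) \<Rightarrow> real" where
  "Tstat n V f = (1 / real n) *
     (\<Sum>i=1..n-1. (Wv V i + (dlt n f i)^2 - Wbar n V - dlt2bar n f)^2)"

definition T1stat :: "nat \<Rightarrow> (nat \<Rightarrow> real) \<Rightarrow> (real \<Rightarrow> real) \<Rightarrow> real" where
  "T1stat n V f = (1 / real n) *
     (\<Sum>i=1..n-3. (Wv V (Suc i) + (dlt n f (Suc i))^2 - V i - V (i + 3)
                    - (f (xpt n (i + 3)) - f (xpt n i))^2)^2)"

definition T2stat :: "nat \<Rightarrow> (nat \<Rightarrow> real) \<Rightarrow> (real \<Rightarrow> real) \<Rightarrow> real" where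
  "T2stat n V f = (1 / real n) *
     (\<Sum>i=1..n-3. (Wt V (Suc i) + (dltt n f (Suc i))^2 - Wt V i - (dltt n f i)^2)^2)"

definition Vbar :: "nat \<Rightarrow> (nat \<Rightarrow> real) \<Rightarrow> real" where
  "Vbar n V = (1 / real n) * (\<Sum>i=1..n. V i)"

end

theory Submission imports Defs begin

lemma holder_lip:
  assumes "holder_class \<alpha> M f" "\<alpha> > 0" "M > 0" "x \<in> {0..1}" "y \<in> {0..1}"
  shows "\<bar>f x - f y\<bar> \<le> M * \<bar>x - y\<bar> powr (min \<alpha> 1)"
proof -
  obtain D where D0: "\<forall>x\<in>{0..1}. D 0 x = f x"
    and Dd: "\<forall>k < nat \<lfloor>\<alpha>\<rfloor>. \<forall>x\<in>{0..1}. (D k has_real_derivative D (Suc k) x) (at x within {0..1})"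
    and Db: "\<forall>k \<le> nat \<lfloor>\<alpha>\<rfloor>. \<forall>x\<in>{0..1}. \<bar>D k x\<bar> \<le> M"
    and Dh: "\<forall>x\<in>{0..1}. \<forall>y\<in>{0..1}. \<bar>D (nat \<lfloor>\<alpha>\<rfloor>) x - D (nat \<lfloor>\<alpha>\<rfloor>) y\<bar> \<le> M * \<bar>x - y\<bar> powr (\<alpha> - of_int \<lfloor>\<alpha>\<rfloor>)"
    using assms(1) unfolding holder_class_def by blast
  show ?thesis
  proof (cases "\<alpha> < 1")
    case True
    then have fl: "\<lfloor>\<alpha>\<rfloor> = 0" using assms(2) by (simp add: floor_eq_iff)
    have "\<bar>D 0 x - D 0 y\<bar> \<le> M * \<bar>x - y\<bar> powr \<alpha>" using Dh assms(4,5) fl by auto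
    then show ?thesis using D0 assms(4,5) True by simp
  next
    case False
    then have k: "0 < nat \<lfloor>\<alpha>\<rfloor>" by simp
    have "norm (D 0 x - D 0 y) \<le> M * norm (x - y)"
    proof (rule differentiable_bound[where f' = "\<lambda>x h. D 1 x * h" and S = "{0..1}"])
      show "convex {0..(1::real)}" by simp
      fix z :: real assume z: "z \<in> {0..1}"
      show "(D 0 has_derivative (\<lambda>h. D 1 z * h)) (at z within {0..1})"
        using Dd k z using has_field_derivative_def by (metis One_nat_def)
      show "onorm (\<lambda>h. D 1 z * h) \<le> M"
      proof (rule onorm_bound)
        show "0 \<le> M" using assms by simp
        fix h :: real
        have "\<bar>D 1 z\<bar> \<le> M" using Db k z by (metis One_nat_def Suc_leI)
        then show "norm (D 1 z * h) \<le> M * norm h" unfolding real_norm_def abs_mult using mult_right_mono[of "\<bar>D 1 z\<bar>" M "\<bar>h\<bar>"]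
          by (simp add: abs_mult mult.commute mult_left_mono)
      qed
    qed (use assms in auto)
    then show ?thesis using D0 assms(4,5) False by simp
  qed
qed

lemma sq3: "((x::real) + y + z)^2 \<le> 3 * (x^2 + y^2 + z^2)"
proof -
  have "0 \<le> (x-y)^2+(y-z)^2+(x-z)^2" by simp
  then show ?thesis by (simp add: power2_eq_square algebra_simps)
qed

lemma aux43: "4 * (a::real) \<le> 3 * (x + y + z) \<Longrightarrow> 0 \<le> x \<Longrightarrow> 0 \<le> y \<Longrightarrow> 0 \<le> z \<Longrightarrow> a \<le> x + y + z"
  by (smt (verit))

lemma var_le:
  fixes V :: "nat \<Rightarrow> real"
  assumes "n \<ge> 1"
  shows "(\<Sum>i=1..n. (V i - Vbar n V)^2) \<le> (\<Sum>i=1..n. (V i - c)^2)"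
proof -
  let ?m = "Vbar n V"
  have sm: "(\<Sum>i=1..n. V i) = real n * ?m" using assms by (simp add: Vbar_def)
  have e1: "(\<Sum>i=1..n. (V i - c)^2) = (\<Sum>i=1..n. (V i - ?m)^2 + (2 * (?m - c) * V i - (?m^2 - c^2)))"
    by (rule sum.cong) (auto simp: power2_eq_square algebra_simps)
  have e2: "(\<Sum>i=1..n. (V i - ?m)^2 + (2 * (?m - c) * V i - (?m^2 - c^2))) = (\<Sum>i=1..n. (V i - ?m)^2) + (\<Sum>i=1..n. (2 * (?m - c) * V i - (?m^2 - c^2)))"
    by (rule sum.distrib)
  have e3: "(\<Sum>i=1..n. (2 * (?m - c) * V i - (?m^2 - c^2))) = 2 * (?m - c) * (\<Sum>i=1..n. V i) - real n * (?m^2 - c^2)"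
    by (simp only: sum_subtractf sum_distrib_left[symmetric] sum_constant card_atLeastAtMost) (simp add: algebra_simps)
  have e4: "2 * (?m - c) * (\<Sum>i=1..n. V i) - real n * (?m^2 - c^2) = real n * (?m - c)^2"
    unfolding sm by (simp add: power2_eq_square algebra_simps)
  have "0 \<le> real n * (?m - c)^2" by simp
  then show ?thesis using e1 e2 e3 e4 by linarith
qed

lemma fdiff:
  assumes "holder_class \<alpha> M f" "\<alpha> > 0" "M > 0" "n \<ge> 1" "i + k \<le> n" "k \<le> 3"
  shows "\<bar>f (xpt n (i + k)) - f (xpt n i)\<bar> \<le> 3 * M * real n powr (- min \<alpha> 1)"
proof -
  let ?b = "min \<alpha> 1"
  have x1: "xpt n (i+k) \<in> {0..1}" "xpt n i \<in> {0..1}" using assms by (auto simp: xpt_def)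
  have "\<bar>xpt n (i+k) - xpt n i\<bar> = real k / real n" using assms by (simp add: xpt_def add_divide_distrib)
  also have "\<dots> \<le> 3 / real n" using assms by (simp add: divide_right_mono)
  finally have a: "\<bar>xpt n (i+k) - xpt n i\<bar> powr ?b \<le> (3 / real n) powr ?b"
    using assms by (intro powr_mono2) auto
  have "(3 / real n) powr ?b = 3 powr ?b * real n powr (- ?b)"
    using assms unfolding powr_minus_divide by (simp add: powr_divide)
  also have "\<dots> \<le> 3 * real n powr (- ?b)"
  proof -
    have "3 powr ?b \<le> 3 powr (1::real)" using assms by (intro powr_mono) auto
    then show ?thesis by (intro mult_right_mono) auto
  qed
  finally have "\<bar>xpt n (i+k) - xpt n i\<bar> powr ?b \<le> 3 * real n powr (- ?b)" using a by linarith
  moreover have "\<bar>f (xpt n (i + k)) - f (xpt n i)\<bar> \<le> M * \<bar>xpt n (i+k) - xpt n i\<bar> powr ?b"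
    using holder_lip[OF assms(1-3) x1] .
  moreover have "M * \<bar>xpt n (i+k) - xpt n i\<bar> powr ?b \<le> M * (3 * real n powr (- ?b))"
    using calculation(1) assms(3) by (intro mult_left_mono) auto
  ultimately show ?thesis by (simp add: mult.assoc)
qed

theorem proposition4p2:
  fixes \<alpha> M :: real
  assumes "\<alpha> > 0" and "M > 0"
  shows "\<exists>C > 0. \<forall>(n::nat) (V::nat \<Rightarrow> real) (f::real \<Rightarrow> real).
           n \<ge> 1 \<longrightarrow> (\<forall>i\<in>{1..n}. V i \<in> {0..M}) \<longrightarrow> holder_class \<alpha> M f \<longrightarrow>
           (1 / real n) * (\<Sum>i=1..n. (V i - Vbar n V)^2)
             \<le> C * (1 / real n + real n powr (- 4 * min \<alpha> 1)
                    + Tstat n V f + T1stat n V f + T2stat n V f)"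
proof -
  define K0 where "K0 = (2*M + 5*M^2)^2 + 2*M^2"
  define K1 where "K1 = 405 * M^4"
  define C where "C = max 1 (max K0 K1)"
  show ?thesis
  proof (rule exI[of _ C], intro conjI allI impI)
    show "C > 0" by (simp add: C_def)
    fix n :: nat and V :: "nat \<Rightarrow> real" and f :: "real \<Rightarrow> real"
    assume n1: "n \<ge> 1" and Vb: "\<forall>i\<in>{1..n}. V i \<in> {0..M}" and hf: "holder_class \<alpha> M f"
    define h where "h = real n powr (- min \<alpha> 1)"
    define q where "q = 9 * M^2 * h^2"
    have h0: "h > 0" using n1 by (simp add: h_def)
    have h1: "h \<le> 1"
    proof -
      have "1 \<le> real n powr min \<alpha> 1" using n1 assms by (intro ge_one_powr_ge_zero) auto
      then show ?thesis unfolding h_def powr_minus_divide by (auto simp: divide_le_eq_1)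
    qed
    have fd: "\<bar>f (xpt n (i + k)) - f (xpt n i)\<bar> \<le> 3 * M * h" if "i + k \<le> n" "k \<le> 3" for i k
      using fdiff[OF hf assms n1 that] by (simp add: h_def)
    have fq: "(f (xpt n (i + k)) - f (xpt n i))^2 \<le> q" if "i + k \<le> n" "k \<le> 3" for i k
    proof -
      have "(f (xpt n (i + k)) - f (xpt n i))^2 = \<bar>f (xpt n (i + k)) - f (xpt n i)\<bar>^2" by simp
      also have "\<dots> \<le> (3 * M * h)^2" using fd[OF that] by (intro power_mono) auto
      finally show ?thesis by (simp add: q_def power_mult_distrib)
    qed
    have q0: "0 \<le> q" by (simp add: q_def)
    have q1: "q \<le> 9 * M^2"
    proof -
      have "h^2 \<le> 1" using h0 h1 by (simp add: power_le_one)
      then show ?thesis unfolding q_def by (simp add: mult_left_le)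
    qed
    have hq: "5 * q^2 = K1 * real n powr (- 4 * min \<alpha> 1)"
    proof -
      have "h^4 = real n powr (real 4 * (- min \<alpha> 1))" unfolding h_def using n1 by (intro powr_power) auto
      then have h4: "h^4 = real n powr (- 4 * min \<alpha> 1)" by simp
      have "q^2 = 81 * M^4 * h^4" unfolding q_def by (simp add: power_mult_distrib power_mult[symmetric])
      then show ?thesis using h4 by (simp add: K1_def)
    qed
    have Vr: "0 \<le> V i" "V i \<le> M" if "1 \<le> i" "i \<le> n" for i using Vb that by auto
    define d where "d i = V (Suc i) - V i" for i
    define c where "c = (Wbar n V + dlt2bar n f) / 2"
    define A where "A i = Wv V i + (dlt n f i)^2 - Wbar n V - dlt2bar n f" for i
    define B where "B i = Wv V (Suc i) + (dlt n f (Suc i))^2 - V i - V (i + 3)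
                    - (f (xpt n (i + 3)) - f (xpt n i))^2" for i
    define Cc where "Cc i = Wt V (Suc i) + (dltt n f (Suc i))^2 - Wt V i - (dltt n f i)^2" for i
    define E where "E i = (dlt n f (Suc i))^2 - (f (xpt n (i + 3)) - f (xpt n i))^2
                        + (dltt n f (Suc i))^2 - (dltt n f i)^2" for i
    have dltq: "(dlt n f i)^2 \<le> q" if "i + 1 \<le> n" for i
      using fq[of i 1] that by (simp add: dlt_def)
    have BCE: "B i + Cc i = 2 * d i + E i" for i
      by (simp add: B_def Cc_def E_def d_def Wv_def Wt_def algebra_simps numeral_eq_Suc)
    have Eb: "(E i)^2 \<le> 4 * q^2" if "i + 3 \<le> n" for i
    proof -
      have a: "(dlt n f (Suc i))^2 \<le> q" using fq[of "Suc i" 1] that by (simp add: dlt_def)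
      have b: "(f (xpt n (i + 3)) - f (xpt n i))^2 \<le> q" using fq[of i 3] that by simp
      have c: "(dltt n f (Suc i))^2 \<le> q" using fq[of "Suc i" 2] that by (simp add: dltt_def)
      have e: "(dltt n f i)^2 \<le> q" using fq[of i 2] that by (simp add: dltt_def)
      have "\<bar>E i\<bar> \<le> 2 * q" unfolding E_def using a b c e
        by (smt (verit) zero_le_power2)
      then have "\<bar>E i\<bar>^2 \<le> (2*q)^2" by (intro power_mono) auto
      then show ?thesis by (simp add: power_mult_distrib)
    qed
    have dB: "(d i)^2 \<le> (B i)^2 + (Cc i)^2 + (E i)^2" for i
    proof -
      have "(2 * d i)^2 = (B i + Cc i + - E i)^2" using BCE[of i] by simp
      also have "\<dots> \<le> 3 * ((B i)^2 + (Cc i)^2 + (- E i)^2)" by (rule sq3)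
      finally have "4 * (d i)^2 \<le> 3 * ((B i)^2 + (Cc i)^2 + (E i)^2)" by (simp add: power_mult_distrib)
      then show ?thesis using zero_le_power2[of "B i"] zero_le_power2[of "Cc i"] zero_le_power2[of "E i"]
        by (intro aux43) auto
    qed
    have VA: "(V i - c)^2 \<le> (A i)^2 + (d i)^2 + ((dlt n f i)^2)^2" for i
    proof -
      have "2 * (V i - c) = A i + - d i + (- ((dlt n f i)^2))"
        by (simp add: A_def c_def d_def Wv_def algebra_simps)
      then have "(2 * (V i - c))^2 = (A i + - d i + (- ((dlt n f i)^2)))^2" by simp
      also have "\<dots> \<le> 3 * ((A i)^2 + (- d i)^2 + (- ((dlt n f i)^2))^2)" by (rule sq3)
      finally have X: "(2 * (V i - c))^2 \<le> 3 * ((A i)^2 + (- d i)^2 + (- ((dlt n f i)^2))^2)" .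
      have "(2*(V i - c))^2 = 4*(V i - c)^2" by (simp add: power2_eq_square algebra_simps)
      then have "4 * (V i - c)^2 \<le> 3 * ((A i)^2 + (d i)^2 + ((dlt n f i)^2)^2)" using X by simp
      then show ?thesis using zero_le_power2[of "A i"] zero_le_power2[of "d i"] zero_le_power2[of "(dlt n f i)^2"]
        by (intro aux43) auto
    qed
    have n0: "real n > 0" using n1 by simp
    have sA: "(\<Sum>i=1..n-1. (A i)^2) = real n * Tstat n V f"
      unfolding Tstat_def A_def using n0 by simp
    have sB: "(\<Sum>i=1..n-3. (B i)^2) = real n * T1stat n V f"
      unfolding T1stat_def B_def using n0 by simp
    have sC: "(\<Sum>i=1..n-3. (Cc i)^2) = real n * T2stat n V f"
      unfolding T2stat_def Cc_def using n0 by simp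
    have T0: "0 \<le> Tstat n V f" "0 \<le> T1stat n V f" "0 \<le> T2stat n V f"
      unfolding Tstat_def T1stat_def T2stat_def by (intro mult_nonneg_nonneg sum_nonneg; simp)+
    have Wb: "0 \<le> Wbar n V \<and> Wbar n V \<le> 2 * M"
    proof -
      have w: "0 \<le> Wv V i \<and> Wv V i \<le> 2*M" if "i \<in> {1..n-1}" for i
      proof -
        have "1 \<le> i" "i \<le> n" "Suc i \<le> n" using that n1 by auto
        then show ?thesis using Vr[of i] Vr[of "Suc i"] by (simp add: Wv_def)
      qed
      have s0: "0 \<le> (\<Sum>i=1..n-1. Wv V i)" using w by (intro sum_nonneg) blast
      have s1: "(\<Sum>i=1..n-1. Wv V i) \<le> real (n-1) * (2 * M)"
        using sum_bounded_above[of "{1..n-1}" "Wv V" "2 * M"] w by simp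
      show ?thesis
      proof (cases "n = 1")
        case True then show ?thesis using assms by (auto simp: Wbar_def)
      next
        case False
        then have p: "real n - 1 > 0" "real (n-1) = real n - 1" using n1 by auto
        show ?thesis using s0 s1 p by (simp add: Wbar_def divide_le_eq mult.commute)
      qed
    qed
    have Db: "0 \<le> dlt2bar n f \<and> dlt2bar n f \<le> q"
    proof -
      have s0: "0 \<le> (\<Sum>i=1..n-1. (dlt n f i)^2)" by (intro sum_nonneg) auto
      have s1: "(\<Sum>i=1..n-1. (dlt n f i)^2) \<le> real (n-1) * q"
      proof -
        have "(dlt n f i)^2 \<le> q" if "i \<in> {1..n-1}" for i
        proof -
          have "i + 1 \<le> n" using that n1 by auto
          then show ?thesis using dltq by blast
        qed
        then show ?thesis using sum_bounded_above[of "{1..n-1}" "\<lambda>i. (dlt n f i)^2" q] by simp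
      qed
      show ?thesis
      proof (cases "n = 1")
        case True then show ?thesis using q0 by (auto simp: dlt2bar_def)
      next
        case False
        then have p: "real n - 1 > 0" "real (n-1) = real n - 1" using n1 by auto
        show ?thesis using s0 s1 p by (simp add: dlt2bar_def divide_le_eq mult.commute)
      qed
    qed
    have Vnc: "(V n - c)^2 \<le> (2*M + 5*M^2)^2"
    proof -
      have c0: "0 \<le> c" using Wb Db unfolding c_def by simp
      have c1: "c \<le> M + 5*M^2" using Wb Db q1 assms unfolding c_def by simp
      have v: "0 \<le> V n" "V n \<le> M" using Vr[of n] n1 by auto
      have p: "0 \<le> 2*M + 5*M^2" using assms by simp
      have "\<bar>V n - c\<bar> \<le> \<bar>2*M + 5*M^2\<bar>"
        using c0 c1 v p by linarith
      then show ?thesis using abs_le_square_iff by blast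
    qed
    have split_n: "(\<Sum>i=1..n. (V i - c)^2) = (\<Sum>i=1..n-1. (V i - c)^2) + (V n - c)^2"
    proof -
      obtain m where m: "n = Suc m" using n1 by (cases n) auto
      show ?thesis unfolding m using n1 m by (simp add: sum.cl_ivl_Suc)
    qed
    have s1: "(\<Sum>i=1..n-1. (V i - c)^2) \<le> (\<Sum>i=1..n-1. (A i)^2) + (\<Sum>i=1..n-1. (d i)^2) + (\<Sum>i=1..n-1. ((dlt n f i)^2)^2)"
    proof -
      have "(\<Sum>i=1..n-1. (V i - c)^2) \<le> (\<Sum>i=1..n-1. (A i)^2 + (d i)^2 + ((dlt n f i)^2)^2)"
        by (rule sum_mono) (rule VA)
      then show ?thesis by (simp add: sum.distrib)
    qed
    have s2: "(\<Sum>i=1..n-1. ((dlt n f i)^2)^2) \<le> real n * q^2"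
    proof -
      have "((dlt n f i)^2)^2 \<le> q^2" if "i \<in> {1..n-1}" for i
      proof -
        have "i + 1 \<le> n" using that n1 by auto
        then have "(dlt n f i)^2 \<le> q" using dltq by blast
        then show ?thesis by (intro power_mono) auto
      qed
      then have "(\<Sum>i=1..n-1. ((dlt n f i)^2)^2) \<le> real (n-1) * q^2"
        using sum_bounded_above[of "{1..n-1}" "\<lambda>i. ((dlt n f i)^2)^2" "q^2"] by simp
      also have "\<dots> \<le> real n * q^2" by (intro mult_right_mono) auto
      finally show ?thesis .
    qed
    have dM: "(d i)^2 \<le> M^2" if "1 \<le> i" "i + 1 \<le> n" for i
    proof -
      have "\<bar>d i\<bar> \<le> \<bar>M\<bar>" using Vr[of i] Vr[of "Suc i"] that assms unfolding d_def by auto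
      then show ?thesis using abs_le_square_iff by blast
    qed
    have s3: "(\<Sum>i=1..n-1. (d i)^2) \<le> (\<Sum>i=1..n-3. (d i)^2) + 2 * M^2"
    proof -
      have sub: "{1..n-3} \<subseteq> {1..n-1}" by auto
      have eq: "(\<Sum>i=1..n-1. (d i)^2) = (\<Sum>i\<in>{1..n-1} - {1..n-3}. (d i)^2) + (\<Sum>i=1..n-3. (d i)^2)"
        using sum.subset_diff[OF sub] by simp
      have sd: "{1..n-1} - {1..n-3} \<subseteq> {n-2, n-1}" by auto
      have cd: "card ({1..n-1} - {1..n-3}) \<le> 2"
      proof -
        have "card ({1..n-1} - {1..n-3}) \<le> card {n-2, n-1}" by (rule card_mono[OF _ sd]) auto
        also have "\<dots> \<le> 2" by (simp add: card_insert_le_m1)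
        finally show ?thesis .
      qed
      have "\<forall>i\<in>{1..n-1} - {1..n-3}. (d i)^2 \<le> M^2"
      proof
        fix i assume "i \<in> {1..n-1} - {1..n-3}"
        then have "1 \<le> i" "i + 1 \<le> n" using n1 by auto
        then show "(d i)^2 \<le> M^2" by (rule dM)
      qed
      then have "(\<Sum>i\<in>{1..n-1} - {1..n-3}. (d i)^2) \<le> real (card ({1..n-1} - {1..n-3})) * M^2"
        using sum_bounded_above[of "{1..n-1} - {1..n-3}" "\<lambda>i. (d i)^2" "M^2"] by simp
      also have "\<dots> \<le> 2 * M^2" using cd by (intro mult_right_mono) auto
      finally show ?thesis using eq by linarith
    qed
    have s4: "(\<Sum>i=1..n-3. (d i)^2) \<le> real n * T1stat n V f + real n * T2stat n V f + real n * (4 * q^2)"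
    proof -
      have "(\<Sum>i=1..n-3. (d i)^2) \<le> (\<Sum>i=1..n-3. (B i)^2 + (Cc i)^2 + (E i)^2)"
        by (rule sum_mono) (rule dB)
      also have "\<dots> = (\<Sum>i=1..n-3. (B i)^2) + (\<Sum>i=1..n-3. (Cc i)^2) + (\<Sum>i=1..n-3. (E i)^2)"
        by (simp add: sum.distrib)
      also have "(\<Sum>i=1..n-3. (E i)^2) \<le> real n * (4 * q^2)"
      proof -
        have "(E i)^2 \<le> 4 * q^2" if "i \<in> {1..n-3}" for i
        proof -
          have "i + 3 \<le> n" using that by auto
          then show ?thesis by (rule Eb)
        qed
        then have "(\<Sum>i=1..n-3. (E i)^2) \<le> real (n-3) * (4 * q^2)"
          using sum_bounded_above[of "{1..n-3}" "\<lambda>i. (E i)^2" "4 * q^2"] by simp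
        also have "\<dots> \<le> real n * (4 * q^2)" by (intro mult_right_mono) auto
        finally show ?thesis .
      qed
      finally show ?thesis using sB sC by linarith
    qed
    have tot: "(\<Sum>i=1..n. (V i - Vbar n V)^2) \<le> real n * (Tstat n V f + T1stat n V f + T2stat n V f)
                + real n * (K1 * real n powr (- 4 * min \<alpha> 1)) + K0"
    proof -
      have "(\<Sum>i=1..n. (V i - Vbar n V)^2) \<le> (\<Sum>i=1..n. (V i - c)^2)" by (rule var_le[OF n1])
      also have "\<dots> \<le> real n * (Tstat n V f + T1stat n V f + T2stat n V f) + real n * (5 * q^2) + K0"
        using split_n s1 s2 s3 s4 sA Vnc unfolding K0_def by (simp add: algebra_simps)
      finally show ?thesis using hq by simp
    qed
    define P where "P = real n powr (- 4 * min \<alpha> 1)"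
    define T where "T = Tstat n V f + T1stat n V f + T2stat n V f"
    have P0: "0 \<le> P" by (simp add: P_def)
    have Tn: "0 \<le> T" using T0 by (simp add: T_def)
    have K00: "0 \<le> K0" by (simp add: K0_def)
    have CK: "1 \<le> C" "K0 \<le> C" "K1 \<le> C" by (auto simp: C_def)
    have "(1 / real n) * (\<Sum>i=1..n. (V i - Vbar n V)^2) \<le> (1 / real n) * (real n * T + real n * (K1 * P) + K0)"
      using tot n0 unfolding T_def P_def by (intro mult_left_mono) auto
    also have "\<dots> = T + K1 * P + K0 * (1 / real n)" using n0 by (simp add: field_simps)
    also have "\<dots> \<le> C * T + C * P + C * (1 / real n)"
    proof -
      have "T \<le> C * T" using CK Tn by (simp add: mult_le_cancel_right1)
      moreover have "K1 * P \<le> C * P" using CK P0 by (intro mult_right_mono) auto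
      moreover have "K0 * (1 / real n) \<le> C * (1 / real n)" using CK n0 by (intro mult_right_mono) auto
      ultimately show ?thesis by linarith
    qed
    also have "\<dots> = C * (1 / real n + real n powr (- 4 * min \<alpha> 1)
                    + Tstat n V f + T1stat n V f + T2stat n V f)"
      unfolding T_def P_def by (simp add: algebra_simps)
    finally show "(1 / real n) * (\<Sum>i=1..n. (V i - Vbar n V)^2)
             \<le> C * (1 / real n + real n powr (- 4 * min \<alpha> 1)
                    + Tstat n V f + T1stat n V f + T2stat n V f)" .
  qed
qed
end
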